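(* Let $(X,T)$ be a topologically transitive Cantor system and let $0<\theta<1$ be such that $\exp(2\pi i\theta)$ is a continuous eigenvalue of $T$. If $f,g\in C(X,\mathbb Z)$ are such that $f-\theta\mathbf 1$ and $g-\theta\mathbf 1$ are real coboundaries, then $f-g$ is an integer coboundary, i.e. $f-g=h-h\circ T$ for some $h\in C(X,\mathbb Z)$.
   Context: A Cantor system is a homeomorphism $T$ of a compact metric totally disconnected space $X$ without isolated points; topologically transitive means some orbit is dense. A continuous eigenvalue is $\lambda$ with $F\circ T=\lambda F$ for some continuous $F:X\to\mathbb S^1$. A real coboundary is $F-F\circ T$ with $F\in C(X,\mathbb R)$. *)

theory Defs
  imports "HOL-Analysis.Analysis"
begin

definition totally_disconnected_set :: "'a::topological_space set \<Rightarrow> bool" where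
  "totally_disconnected_set X \<longleftrightarrow> (\<forall>C. C \<subseteq> X \<longrightarrow> connected C \<longrightarrow> (\<forall>x\<in>C. \<forall>y\<in>C. x = y))"

definition cantor_system :: "'a::metric_space set \<Rightarrow> ('a \<Rightarrow> 'a) \<Rightarrow> bool" where
  "cantor_system X T \<longleftrightarrow> X \<noteq> {} \<and> compact X \<and> totally_disconnected_set X \<and>
     (\<forall>x\<in>X. x islimpt X) \<and> (\<exists>S. homeomorphism X X T S)"

definition topologically_transitive :: "'a::metric_space set \<Rightarrow> ('a \<Rightarrow> 'a) \<Rightarrow> bool" where
  "topologically_transitive X T \<longleftrightarrow>
     (\<exists>x\<in>X. closure ({(T ^^ n) x | n. True} \<union> {(the_inv_into X T ^^ n) x | n. True}) = X)"

definition continuous_eigenvalue :: "'a::metric_space set \<Rightarrow> ('a \<Rightarrow> 'a) \<Rightarrow> complex \<Rightarrow> bool" where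
  "continuous_eigenvalue X T lam \<longleftrightarrow>
     (\<exists>F :: 'a \<Rightarrow> complex. continuous_on X F \<and> (\<forall>x\<in>X. norm (F x) = 1) \<and>
        (\<forall>x\<in>X. F (T x) = lam * F x))"

definition real_coboundary :: "'a::metric_space set \<Rightarrow> ('a \<Rightarrow> 'a) \<Rightarrow> ('a \<Rightarrow> real) \<Rightarrow> bool" where
  "real_coboundary X T u \<longleftrightarrow>
     (\<exists>F :: 'a \<Rightarrow> real. continuous_on X F \<and> (\<forall>x\<in>X. u x = F x - F (T x)))"

definition int_coboundary :: "'a::metric_space set \<Rightarrow> ('a \<Rightarrow> 'a) \<Rightarrow> ('a \<Rightarrow> int) \<Rightarrow> bool" where
  "int_coboundary X T u \<longleftrightarrow>
     (\<exists>h :: 'a \<Rightarrow> int. continuous_on X h \<and> (\<forall>x\<in>X. u x = h x - h (T x)))"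

end

theory Submission
  imports Defs
begin

lemma int_valued_continuous:
  fixes h :: "'a::metric_space \<Rightarrow> int"
  assumes "continuous_on X (\<lambda>x. real_of_int (h x))"
  shows "continuous_on X h"
proof -
  have "(h \<longlongrightarrow> h x) (at x within X)" if x: "x \<in> X" for x
  proof -
    have "((\<lambda>x. real_of_int (h x)) \<longlongrightarrow> real_of_int (h x)) (at x within X)"
      using assms x by (simp add: continuous_on_def)
    hence ev: "eventually (\<lambda>y. dist (real_of_int (h y)) (real_of_int (h x)) < 1) (at x within X)"
      by (rule tendstoD) simp
    have "eventually (\<lambda>y. h y = h x) (at x within X)"
    proof (rule eventually_mono[OF ev])
      fix y assume "dist (real_of_int (h y)) (real_of_int (h x)) < 1"
      hence "\<bar>real_of_int (h y - h x)\<bar> < 1" by (simp add: dist_real_def)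
      hence "\<bar>h y - h x\<bar> < 1" by linarith
      thus "h y = h x" by linarith
    qed
    thus ?thesis by (simp add: tendsto_discrete)
  qed
  thus ?thesis by (simp add: continuous_on_def)
qed

theorem mainTheorem8:
  fixes X :: "'a::metric_space set" and T :: "'a \<Rightarrow> 'a" and \<theta> :: real
    and f g :: "'a \<Rightarrow> int"
  assumes "cantor_system X T" and "topologically_transitive X T"
    and "0 < \<theta>" and "\<theta> < 1"
    and "continuous_eigenvalue X T (exp (2 * pi * \<i> * complex_of_real \<theta>))"
    and "continuous_on X f" and "continuous_on X g"
    and "real_coboundary X T (\<lambda>x. real_of_int (f x) - \<theta>)"
    and "real_coboundary X T (\<lambda>x. real_of_int (g x) - \<theta>)"
  shows "int_coboundary X T (\<lambda>x. f x - g x)"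
proof -
  obtain F where F: "continuous_on X F" "\<And>x. x \<in> X \<Longrightarrow> real_of_int (f x) - \<theta> = F x - F (T x)"
    using assms(8) unfolding real_coboundary_def by blast
  obtain G where G: "continuous_on X G" "\<And>x. x \<in> X \<Longrightarrow> real_of_int (g x) - \<theta> = G x - G (T x)"
    using assms(9) unfolding real_coboundary_def by blast
  define H where "H x = F x - G x" for x
  have Hc: "continuous_on X H" unfolding H_def using F(1) G(1) by (intro continuous_intros)
  have HT: "H x - H (T x) = real_of_int (f x - g x)" if "x \<in> X" for x
    using F(2)[OF that] G(2)[OF that] unfolding H_def by simp
  obtain S where hom: "homeomorphism X X T S"
    using assms(1) unfolding cantor_system_def by blast
  have cX: "compact X" using assms(1) unfolding cantor_system_def by blast
  have TX: "T x \<in> X" if "x \<in> X" for x using hom that unfolding homeomorphism_def by blast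
  have injT: "inj_on T X" using hom unfolding homeomorphism_def by (metis inj_on_inverseI)
  have imT: "T ` X = X" using hom unfolding homeomorphism_def by blast
  define R where "R = the_inv_into X T"
  have RX: "R y \<in> X" if "y \<in> X" for y
    unfolding R_def using the_inv_into_into[OF injT] that imT by blast
  have TR: "T (R y) = y" if "y \<in> X" for y
    unfolding R_def using f_the_inv_into_f[OF injT] that imT by blast
  obtain x0 where x0: "x0 \<in> X"
    and dense: "closure ({(T ^^ n) x0 | n. True} \<union> {(the_inv_into X T ^^ n) x0 | n. True}) = X"
    using assms(2) unfolding topologically_transitive_def by blast
  define A where "A = X \<inter> (\<lambda>x. H x - H x0) -` \<int>"
  have Acl: "closed A" unfolding A_def
    by (rule continuous_closed_preimage)
       (auto intro!: continuous_intros Hc compact_imp_closed cX)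
  have stepT: "T x \<in> A" if "x \<in> A" for x
  proof -
    have x: "x \<in> X" "H x - H x0 \<in> \<int>" using that A_def by auto
    have "H (T x) - H x0 = (H x - H x0) - real_of_int (f x - g x)" using HT[OF x(1)] by simp
    also have "\<dots> \<in> \<int>" by (rule Ints_diff[OF x(2) Ints_of_int])
    finally show ?thesis using TX[OF x(1)] A_def by auto
  qed
  have stepR: "R x \<in> A" if "x \<in> A" for x
  proof -
    have x: "x \<in> X" "H x - H x0 \<in> \<int>" using that A_def by auto
    have "H (R x) - H x0 = (H x - H x0) + real_of_int (f (R x) - g (R x))"
      using HT[OF RX[OF x(1)]] TR[OF x(1)] by simp
    also have "\<dots> \<in> \<int>" by (rule Ints_add[OF x(2) Ints_of_int])
    finally show ?thesis using RX[OF x(1)] A_def by auto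
  qed
  have x0A: "x0 \<in> A" using x0 A_def by simp
  have "(T ^^ n) x0 \<in> A" for n by (induction n) (auto intro: stepT x0A)
  moreover have "(R ^^ n) x0 \<in> A" for n by (induction n) (auto intro: stepR x0A)
  ultimately have "{(T ^^ n) x0 | n. True} \<union> {(the_inv_into X T ^^ n) x0 | n. True} \<subseteq> A"
    unfolding R_def by blast
  hence "closure ({(T ^^ n) x0 | n. True} \<union> {(the_inv_into X T ^^ n) x0 | n. True}) \<subseteq> A" by (rule closure_minimal[OF _ Acl])
  hence "X \<subseteq> A" by (simp only: dense)
  hence inZ: "H x - H x0 \<in> \<int>" if "x \<in> X" for x using that A_def by auto
  define h where "h x = \<lfloor>H x - H x0\<rfloor>" for x
  have hH: "real_of_int (h x) = H x - H x0" if "x \<in> X" for x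
    using inZ[OF that] unfolding h_def by (metis Ints_cases floor_of_int)
  have "continuous_on X (\<lambda>x. real_of_int (h x))"
  proof (rule continuous_on_eq[of X "\<lambda>x. H x - H x0"])
    show "continuous_on X (\<lambda>x. H x - H x0)" using Hc by (intro continuous_intros)
  qed (simp add: hH)
  hence "continuous_on X h" by (rule int_valued_continuous)
  moreover have "f x - g x = h x - h (T x)" if "x \<in> X" for x
  proof -
    have "real_of_int (f x - g x) = real_of_int (h x - h (T x))"
      using HT[OF that] hH[OF that] hH[OF TX[OF that]] by simp
    thus ?thesis by linarith
  qed
  ultimately show ?thesis unfolding int_coboundary_def by blast
qed

end
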